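(* Let $E,F$ be Banach spaces, $1\le p<\infty$, and let $P:E\to F$ be a continuous $n$-homogeneous polynomial which is almost $p$-summing at every point of $E$. Then for every $a\in E$, the derivative $dP(a):E\to F$ (a continuous linear map) is almost $p$-summing at the origin.
   Context: $(r_j)$ are the Rademacher functions. For a finite sequence $(x_j)_{j=1}^k$ in $E$, $\Vert(x_{j})_{j=1}^k\Vert_{w,p}:=\sup_{\varphi\in B_{E'}}(\sum_{j=1}^k|\varphi(x_{j})|^{p})^{1/p}$. A mapping $f:E\to F$ is almost $p$-summing at $b\in E$ if there exist $C_b,\epsilon_b,r_b>0$ with $(\int_{0}^{1}\Vert\sum_{j=1}^{k}(f(b+x_{j})-f(b))r_{j}(t)\Vert^{2}dt)^{1/2}\leq C_{b}\Vert(x_{j})_{j=1}^{k}\Vert_{w,p}^{r_{b}}$ for all $k$ and all $x_1,\dots,x_k\in E$ with $\Vert(x_{j})_{j=1}^{k}\Vert_{w,p}<\epsilon_{b}$. *)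

theory Defs
  imports "HOL-Analysis.Analysis"
begin

text \<open>Rademacher functions r_j(t) = sign(sin(2^j pi t)), j >= 1 (up to the null set of dyadic points).\<close>
definition rademacher :: "nat \<Rightarrow> real \<Rightarrow> real" where
  "rademacher j t = (if even \<lfloor>2 ^ j * t\<rfloor> then 1 else -1)"

definition weak_pnorm :: "real \<Rightarrow> nat \<Rightarrow> (nat \<Rightarrow> 'a::real_normed_vector) \<Rightarrow> real" where
  "weak_pnorm p k x = Sup {(\<Sum>j=1..k. \<bar>\<phi> (x j)\<bar> powr p) powr (1/p) | \<phi>.
      bounded_linear \<phi> \<and> onorm \<phi> \<le> 1}"

definition almost_p_summing_at ::
  "real \<Rightarrow> ('a::real_normed_vector \<Rightarrow> 'b::real_normed_vector) \<Rightarrow> 'a \<Rightarrow> bool" where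
  "almost_p_summing_at p f b \<longleftrightarrow>
     (\<exists>C \<epsilon> r. C > 0 \<and> \<epsilon> > 0 \<and> r > 0 \<and>
       (\<forall>k. \<forall>x :: nat \<Rightarrow> 'a. weak_pnorm p k x < \<epsilon> \<longrightarrow>
          sqrt (integral {0..1} (\<lambda>t. (norm (\<Sum>j=1..k. rademacher j t *\<^sub>R (f (b + x j) - f b)))\<^sup>2))
            \<le> C * weak_pnorm p k x powr r))"

text \<open>Continuous n-linear maps A : E^n -> F, with arguments given as functions nat => E
  (only the first n arguments matter).\<close>
definition bounded_multilinear :: "nat \<Rightarrow> ((nat \<Rightarrow> 'a::real_normed_vector) \<Rightarrow> 'b::real_normed_vector) \<Rightarrow> bool" where
  "bounded_multilinear n A \<longleftrightarrow>
     (\<forall>x y. (\<forall>i<n. x i = y i) \<longrightarrow> A x = A y) \<and>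
     (\<forall>i<n. \<forall>x. linear (\<lambda>v. A (x(i := v)))) \<and>
     (\<exists>C. \<forall>x. norm (A x) \<le> C * (\<Prod>i<n. norm (x i)))"

definition continuous_homogeneous_polynomial :: "nat \<Rightarrow> ('a::real_normed_vector \<Rightarrow> 'b::real_normed_vector) \<Rightarrow> bool" where
  "continuous_homogeneous_polynomial n P \<longleftrightarrow>
     (\<exists>A. bounded_multilinear n A \<and> (\<forall>x. P x = A (\<lambda>_. x)))"

end

theory Submission
  imports Defs
begin

lemma rad_meas[measurable]: "rademacher j \<in> borel_measurable borel"
  unfolding rademacher_def by measurable

lemma rad_abs: "\<bar>rademacher j t\<bar> = 1"
  by (simp add: rademacher_def)

lemma rad_vec_meas:
  "(\<lambda>t. F (\<lambda>j. if 1 \<le> j \<and> j \<le> k then rademacher j t else 0) :: real) \<in> borel_measurable borel"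
proof (induction k arbitrary: F)
  case 0
  have "(\<lambda>j. if 1 \<le> j \<and> j \<le> (0::nat) then rademacher j t else 0) = (\<lambda>_. 0)" for t
    by auto
  then show ?case by simp
next
  case (Suc k)
  define V where "V t = (\<lambda>j. if 1 \<le> j \<and> j \<le> k then rademacher j t else 0)" for t
  have eq: "(\<lambda>j. if 1 \<le> j \<and> j \<le> Suc k then rademacher j t else 0) = (V t)(Suc k := rademacher (Suc k) t)" for t
    by (auto simp: V_def fun_eq_iff)
  have eq2: "F ((V t)(Suc k := rademacher (Suc k) t)) =
     (if rademacher (Suc k) t = 1 then F ((V t)(Suc k := 1)) else F ((V t)(Suc k := -1)))" for t
    by (auto simp: rademacher_def)
  have m1: "(\<lambda>t. F ((V t)(Suc k := 1))) \<in> borel_measurable borel"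
    using Suc.IH[of "\<lambda>w. F (w(Suc k := 1))"] by (simp add: V_def)
  have m2: "(\<lambda>t. F ((V t)(Suc k := -1))) \<in> borel_measurable borel"
    using Suc.IH[of "\<lambda>w. F (w(Suc k := -1))"] by (simp add: V_def)
  have "(\<lambda>t. if rademacher (Suc k) t = 1 then F ((V t)(Suc k := 1)) else F ((V t)(Suc k := -1))) \<in> borel_measurable borel"
    using m1 m2 by measurable
  moreover have "(\<lambda>t. F (\<lambda>j. if 1 \<le> j \<and> j \<le> Suc k then rademacher j t else 0)) =
     (\<lambda>t. if rademacher (Suc k) t = 1 then F ((V t)(Suc k := 1)) else F ((V t)(Suc k := -1)))"
    by (rule ext) (simp only: eq eq2)
  ultimately show ?case by simp
qed


lemma rad_integrable:
  fixes v :: "nat \<Rightarrow> 'b::real_normed_vector"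
  shows "(\<lambda>t. (norm (\<Sum>j=1..k. rademacher j t *\<^sub>R v j))\<^sup>2) integrable_on {0..1}"
proof (rule measurable_bounded_by_integrable_imp_integrable)
  have "(\<lambda>t. (\<lambda>w. (norm (\<Sum>j=1..k. w j *\<^sub>R v j))\<^sup>2) (\<lambda>j. if 1 \<le> j \<and> j \<le> k then rademacher j t else 0)) \<in> borel_measurable borel"
    by (rule rad_vec_meas)
  moreover have "(\<lambda>t. (\<lambda>w. (norm (\<Sum>j=1..k. w j *\<^sub>R v j))\<^sup>2) (\<lambda>j. if 1 \<le> j \<and> j \<le> k then rademacher j t else 0))
     = (\<lambda>t. (norm (\<Sum>j=1..k. rademacher j t *\<^sub>R v j))\<^sup>2)"
    by (auto intro!: sum.cong simp: fun_eq_iff)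
  ultimately have "(\<lambda>t. (norm (\<Sum>j=1..k. rademacher j t *\<^sub>R v j))\<^sup>2) \<in> borel_measurable borel"
    by simp
  then show "(\<lambda>t. (norm (\<Sum>j=1..k. rademacher j t *\<^sub>R v j))\<^sup>2) \<in> borel_measurable (lebesgue_on {0..1})"
    by (simp add: measurable_completion measurable_restrict_space1)
  show "(\<lambda>t::real. (\<Sum>j=1..k. norm (v j))\<^sup>2) integrable_on {0..1}" using integrable_const[of "(\<Sum>j=1..k. norm (v j))\<^sup>2" "0::real" 1] by (simp add: cbox_interval)
  show "{0..1::real} \<in> sets lebesgue" by simp
  fix t :: real
  have "norm (\<Sum>j=1..k. rademacher j t *\<^sub>R v j) \<le> (\<Sum>j=1..k. norm (rademacher j t *\<^sub>R v j))"
    by (rule norm_sum)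
  also have "\<dots> = (\<Sum>j=1..k. norm (v j))" by (simp add: rad_abs)
  finally show "norm ((norm (\<Sum>j=1..k. rademacher j t *\<^sub>R v j))\<^sup>2) \<le> (\<Sum>j=1..k. norm (v j))\<^sup>2"
    by (simp add: power_mono)
qed

lemma bm_cong: "bounded_multilinear n A \<Longrightarrow> (\<And>i. i < n \<Longrightarrow> x i = y i) \<Longrightarrow> A x = A y"
  unfolding bounded_multilinear_def by blast

lemma bm_lin: "bounded_multilinear n A \<Longrightarrow> i < n \<Longrightarrow> linear (\<lambda>v. A (x(i := v)))"
  unfolding bounded_multilinear_def by blast

lemma bm_bound: "bounded_multilinear n A \<Longrightarrow> \<exists>B\<ge>0. \<forall>x. norm (A x) \<le> B * (\<Prod>i<n. norm (x i))"
proof -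
  assume "bounded_multilinear n A"
  then obtain C where C: "\<And>x. norm (A x) \<le> C * (\<Prod>i<n. norm (x i))"
    unfolding bounded_multilinear_def by blast
  have "norm (A x) \<le> \<bar>C\<bar> * (\<Prod>i<n. norm (x i))" for x
  proof -
    have "C * (\<Prod>i<n. norm (x i)) \<le> \<bar>C\<bar> * (\<Prod>i<n. norm (x i))"
      by (intro mult_right_mono) (auto simp: prod_nonneg)
    then show ?thesis using C[of x] by linarith
  qed
  then show ?thesis by (intro exI[of _ "\<bar>C\<bar>"]) auto
qed

lemma bm_tele:
  assumes bm: "bounded_multilinear n A"
  shows "A y - A z = (\<Sum>k<n. A ((\<lambda>i. if i < k then y i else z i)(k := y k - z k)))"
proof -
  define w where "w k = (\<lambda>i. if i < k then y i else z i)" for k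
  have step: "A (w (Suc k)) - A (w k) = A ((w k)(k := y k - z k))" if "k < n" for k
  proof -
    have l: "linear (\<lambda>v. A ((w k)(k := v)))" using bm_lin[OF bm that] .
    have e1: "w (Suc k) = (w k)(k := y k)" by (auto simp: w_def fun_eq_iff)
    have e2: "w k = (w k)(k := z k)" by (auto simp: w_def fun_eq_iff)
    have "A ((w k)(k := y k)) - A ((w k)(k := z k)) = A ((w k)(k := y k - z k))"
      using linear_diff[OF l, of "y k" "z k"] by simp
    moreover have "A (w (Suc k)) - A (w k) = A ((w k)(k := y k)) - A ((w k)(k := z k))"
      using arg_cong[where f=A, OF e1] arg_cong[where f=A, OF e2] by simp
    ultimately show ?thesis by simp
  qed
  have "(\<Sum>k<n. A ((w k)(k := y k - z k))) = (\<Sum>k<n. A (w (Suc k)) - A (w k))"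
    using step by simp
  also have "\<dots> = A (w n) - A (w 0)" by (rule sum_lessThan_telescope)
  also have "A (w n) = A y" by (rule bm_cong[OF bm]) (auto simp: w_def)
  also have "A (w 0) = A z" by (rule bm_cong[OF bm]) (auto simp: w_def)
  finally show ?thesis by (simp only: w_def)
qed

lemma bm_slot0:
  assumes bm: "bounded_multilinear n A" and "j < n"
  shows "A (u(j := 0)) = 0"
  using linear_0[OF bm_lin[OF bm \<open>j < n\<close>, of u]] by simp

lemma prod_bound1:
  fixes v :: "nat \<Rightarrow> 'a::real_normed_vector"
  assumes "k < n" "\<And>i. i < n \<Longrightarrow> i \<noteq> k \<Longrightarrow> norm (v i) \<le> M" "1 \<le> M"
  shows "(\<Prod>i<n. norm (v i)) \<le> norm (v k) * M ^ n"
proof -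
  have "(\<Prod>i<n. norm (v i)) = norm (v k) * (\<Prod>i\<in>{..<n} - {k}. norm (v i))"
    using assms(1) by (simp add: prod.remove)
  also have "(\<Prod>i\<in>{..<n} - {k}. norm (v i)) \<le> (\<Prod>i\<in>{..<n} - {k}. M)"
    by (intro prod_mono) (use assms in auto)
  also have "\<dots> = M ^ card ({..<n} - {k})" by simp
  also have "\<dots> \<le> M ^ n"
    by (intro power_increasing assms(3)) (use card_mono[of "{..<n}" "{..<n} - {k}"] in auto)
  finally show ?thesis by (simp add: mult_left_mono)
qed

lemma prod_bound2:
  fixes v :: "nat \<Rightarrow> 'a::real_normed_vector"
  assumes "j < n" "k < n" "j \<noteq> k" "\<And>i. i < n \<Longrightarrow> i \<noteq> j \<Longrightarrow> i \<noteq> k \<Longrightarrow> norm (v i) \<le> M" "1 \<le> M"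
  shows "(\<Prod>i<n. norm (v i)) \<le> norm (v j) * norm (v k) * M ^ n"
proof -
  have "(\<Prod>i<n. norm (v i)) = norm (v j) * (\<Prod>i\<in>{..<n} - {j}. norm (v i))"
    using assms(1) by (simp add: prod.remove)
  also have "(\<Prod>i\<in>{..<n} - {j}. norm (v i)) = norm (v k) * (\<Prod>i\<in>{..<n} - {j} - {k}. norm (v i))"
    using assms by (subst prod.remove[of _ k]) auto
  also have "(\<Prod>i\<in>{..<n} - {j} - {k}. norm (v i)) \<le> (\<Prod>i\<in>{..<n} - {j} - {k}. M)"
    by (intro prod_mono) (use assms in auto)
  also have "\<dots> = M ^ card ({..<n} - {j} - {k})" by simp
  also have "\<dots> \<le> M ^ n"
    by (intro power_increasing assms(5)) (use card_mono[of "{..<n}" "{..<n} - {j} - {k}"] in auto)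
  finally show ?thesis by (simp add: mult_left_mono mult.assoc)
qed

lemma bm_slot_bl:
  assumes bm: "bounded_multilinear n A" and k: "k < n"
  shows "bounded_linear (\<lambda>h. A ((\<lambda>_. a)(k := h)))"
proof -
  obtain B where B: "B \<ge> 0" "\<And>x. norm (A x) \<le> B * (\<Prod>i<n. norm (x i))"
    using bm_bound[OF bm] by blast
  have l: "linear (\<lambda>h. A ((\<lambda>_. a)(k := h)))" using bm_lin[OF bm k] .
  show ?thesis
  proof (rule bounded_linear_intro)
    show "A ((\<lambda>_. a)(k := x + y)) = A ((\<lambda>_. a)(k := x)) + A ((\<lambda>_. a)(k := y))" for x y
      using linear_add[OF l] by simp
    show "A ((\<lambda>_. a)(k := r *\<^sub>R x)) = r *\<^sub>R A ((\<lambda>_. a)(k := x))" for r x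
      using linear_scale[OF l] by simp
    show "norm (A ((\<lambda>_. a)(k := x))) \<le> norm x * (B * (norm a + 1) ^ n)" for x
    proof -
      have "(\<Prod>i<n. norm (((\<lambda>_. a)(k := x)) i)) \<le> norm (((\<lambda>_. a)(k := x)) k) * (norm a + 1) ^ n"
        by (rule prod_bound1[OF k]) auto
      then have "B * (\<Prod>i<n. norm (((\<lambda>_. a)(k := x)) i)) \<le> B * (norm x * (norm a + 1) ^ n)"
        using B(1) by (simp add: mult_left_mono)
      then show ?thesis using B(2)[of "(\<lambda>_. a)(k := x)"] by (simp add: algebra_simps)
    qed
  qed
qed

lemma bm_deriv:
  fixes A :: "(nat \<Rightarrow> 'a::real_normed_vector) \<Rightarrow> 'b::real_normed_vector"
  assumes bm: "bounded_multilinear n A"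
  shows "((\<lambda>x. A (\<lambda>_. x)) has_derivative (\<lambda>h. \<Sum>k<n. A ((\<lambda>_. a)(k := h)))) (at a)"
proof -
  obtain B where B: "B \<ge> 0" "\<And>x. norm (A x) \<le> B * (\<Prod>i<n. norm (x i))"
    using bm_bound[OF bm] by blast
  define D where "D h = (\<Sum>k<n. A ((\<lambda>_. a)(k := h)))" for h
  have bl: "bounded_linear D"
    unfolding D_def by (intro bounded_linear_sum bm_slot_bl[OF bm]) auto
  define M where "M (h::'a) = norm a + norm h + 1" for h
  have rem: "norm (A (\<lambda>_. a + h) - A (\<lambda>_. a) - D h) \<le> real n * real n * (B * (norm h * norm h * M h ^ n))" for h
  proof -
    define w where "w k = (\<lambda>i::nat. if i < k then a + h else a)" for k :: nat
    have e42: "A (\<lambda>_. a + h) - A (\<lambda>_. a) = (\<Sum>k<n. A ((w k)(k := h)))"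
      using bm_tele[OF bm, of "\<lambda>_. a + h" "\<lambda>_. a"] unfolding w_def by (simp only: add_diff_cancel_left')
    have eq: "A (\<lambda>_. a + h) - A (\<lambda>_. a) - D h = (\<Sum>k<n. A ((w k)(k := h)) - A ((\<lambda>_. a)(k := h)))"
      unfolding e42 D_def by (rule sum_subtractf[symmetric])
    have tm: "norm (A ((w k)(k := h)) - A ((\<lambda>_. a)(k := h))) \<le> real n * (B * (norm h * norm h * M h ^ n))"
      if k: "k < n" for k
    proof -
      define y' where "y' = (w k)(k := h)"
      define z' where "z' = (\<lambda>_. a)(k := h)"
      have "A y' - A z' = (\<Sum>j<n. A ((\<lambda>i. if i < j then y' i else z' i)(j := y' j - z' j)))"
        by (rule bm_tele[OF bm])
      also have "norm \<dots> \<le> (\<Sum>j<n. norm (A ((\<lambda>i. if i < j then y' i else z' i)(j := y' j - z' j))))"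
        by (rule norm_sum)
      also have "\<dots> \<le> (\<Sum>j<n. B * (norm h * norm h * M h ^ n))"
      proof (rule sum_mono)
        fix j assume j: "j \<in> {..<n}"
        define u where "u = (\<lambda>i. if i < j then y' i else z' i)"
        show "norm (A ((\<lambda>i. if i < j then y' i else z' i)(j := y' j - z' j))) \<le> B * (norm h * norm h * M h ^ n)"
        proof (cases "j < k")
          case True
          have d: "y' j - z' j = h" using True by (simp add: y'_def z'_def w_def)
          have "(\<Prod>i<n. norm ((u(j := h)) i)) \<le> norm ((u(j := h)) j) * norm ((u(j := h)) k) * M h ^ n"
          proof (rule prod_bound2)
            show "j < n" using j by simp
            show "k < n" by fact
            show "j \<noteq> k" using True by simp
            show "1 \<le> M h" by (simp add: M_def)
            fix i assume "i < n" "i \<noteq> j" "i \<noteq> k"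
            then show "norm ((u(j := h)) i) \<le> M h"
              by (auto simp: u_def y'_def z'_def w_def M_def intro: order_trans[OF norm_triangle_ineq])
          qed
          also have "norm ((u(j := h)) j) = norm h" by simp
          also have "norm ((u(j := h)) k) = norm h" using True by (simp add: u_def z'_def)
          finally have "B * (\<Prod>i<n. norm ((u(j := h)) i)) \<le> B * (norm h * norm h * M h ^ n)"
            using B(1) by (simp add: mult_left_mono)
          then show ?thesis using B(2)[of "u(j := h)"] d by (simp add: u_def)
        next
          case False
          have d: "y' j - z' j = 0" using False by (simp add: y'_def z'_def w_def)
          have "A ((\<lambda>i. if i < j then y' i else z' i)(j := 0)) = 0"
            using bm_slot0[OF bm] j by simp
          moreover have "0 \<le> B * (norm h * norm h * M h ^ n)"
            using B(1) by (simp add: M_def)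
          ultimately show ?thesis using d by simp
        qed
      qed
      also have "\<dots> = real n * (B * (norm h * norm h * M h ^ n))" by simp
      finally show ?thesis by (simp add: y'_def z'_def)
    qed
    have "norm (A (\<lambda>_. a + h) - A (\<lambda>_. a) - D h) \<le> (\<Sum>k<n. norm (A ((w k)(k := h)) - A ((\<lambda>_. a)(k := h))))"
      unfolding eq by (rule norm_sum)
    also have "\<dots> \<le> (\<Sum>k<n. real n * (B * (norm h * norm h * M h ^ n)))"
      by (rule sum_mono) (use tm in auto)
    also have "\<dots> = real n * real n * (B * (norm h * norm h * M h ^ n))" by simp
    finally show ?thesis .
  qed
  define g where "g h = real n * real n * B * norm h * M h ^ n" for h
  have rem': "norm (A (\<lambda>_. a + h) - A (\<lambda>_. a) - D h) \<le> g h * norm h" for h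
  proof -
    have "real n * real n * (B * (norm h * norm h * M h ^ n)) = g h * norm h"
      unfolding g_def by (simp only: mult.commute mult.left_commute mult.assoc)
    note e = this
    show ?thesis using rem[of h] unfolding e .
  qed
  have lim: "(\<lambda>h. norm (A (\<lambda>_. a + h) - A (\<lambda>_. a) - D h) / norm h) \<midarrow>0\<rightarrow> 0"
  proof (rule Lim_null_comparison)
    show "\<forall>\<^sub>F h in at 0. norm (norm (A (\<lambda>_. a + h) - A (\<lambda>_. a) - D h) / norm h) \<le> g h"
    proof (rule always_eventually, rule allI)
      fix h :: 'a
      show "norm (norm (A (\<lambda>_. a + h) - A (\<lambda>_. a) - D h) / norm h) \<le> g h"
      proof (cases "h = 0")
        case True
        have "0 \<le> g h" unfolding g_def M_def using B(1) by simp
        then show ?thesis using True by simp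
      next
        case False
        then have hp: "norm h > 0" by simp
        have "norm (A (\<lambda>_. a + h) - A (\<lambda>_. a) - D h) / norm h \<le> g h"
          using rem'[of h] hp by (simp add: pos_divide_le_eq)
        then show ?thesis by simp
      qed
    qed
    have t1: "((\<lambda>h::'a. norm h) \<longlongrightarrow> 0) (at 0)"
      using tendsto_norm_zero[OF tendsto_ident_at[of "0::'a" UNIV]] by simp
    have t2: "((\<lambda>h::'a. (norm a + norm h + 1) ^ n) \<longlongrightarrow> (norm a + 0 + 1) ^ n) (at 0)"
      by (intro tendsto_intros t1)
    have "((\<lambda>h::'a. real n * real n * B * norm h * (norm a + norm h + 1) ^ n) \<longlongrightarrow> real n * real n * B * 0 * (norm a + 0 + 1) ^ n) (at 0)"
      by (intro tendsto_intros t1 t2)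
    then show "(g \<longlongrightarrow> 0) (at 0)" unfolding g_def M_def by simp
  qed
  show ?thesis
    unfolding has_derivative_at using bl lim by (simp add: D_def[abs_def])
qed

lemma bm_poly:
  assumes bm: "bounded_multilinear n A"
  shows "m \<le> n \<Longrightarrow> \<exists>c. \<forall>t. A (\<lambda>i. if i < m then a + t *\<^sub>R x else z i) = (\<Sum>k\<le>m. t ^ k *\<^sub>R c k)"
proof (induction m arbitrary: z)
  case 0
  show ?case by (intro exI[of _ "\<lambda>_. A z"]) simp
next
  case (Suc m)
  then have m: "m < n" by simp
  obtain c1 where c1: "\<And>t. A (\<lambda>i. if i < m then a + t *\<^sub>R x else (z(m := a)) i) = (\<Sum>k\<le>m. t ^ k *\<^sub>R c1 k)"
    using Suc.IH[of "z(m := a)"] m by auto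
  obtain c2 where c2: "\<And>t. A (\<lambda>i. if i < m then a + t *\<^sub>R x else (z(m := x)) i) = (\<Sum>k\<le>m. t ^ k *\<^sub>R c2 k)"
    using Suc.IH[of "z(m := x)"] m by auto
  define c where "c k = (if k \<le> m then c1 k else 0) + (if k = 0 then 0 else c2 (k - 1))" for k
  show ?case
  proof (intro exI[of _ c] allI)
    fix t :: real
    define W where "W = (\<lambda>i. if i < m then a + t *\<^sub>R x else z i)"
    have l: "linear (\<lambda>v. A (W(m := v)))" using bm_lin[OF bm m] .
    have e0: "(\<lambda>i. if i < Suc m then a + t *\<^sub>R x else z i) = W(m := a + t *\<^sub>R x)"
      by (auto simp: W_def fun_eq_iff)
    have ea: "W(m := a) = (\<lambda>i. if i < m then a + t *\<^sub>R x else (z(m := a)) i)"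
      by (auto simp: W_def fun_eq_iff)
    have ex: "W(m := x) = (\<lambda>i. if i < m then a + t *\<^sub>R x else (z(m := x)) i)"
      by (auto simp: W_def fun_eq_iff)
    have "A (W(m := a + t *\<^sub>R x)) = A (W(m := a)) + t *\<^sub>R A (W(m := x))"
      using linear_add[OF l, of a "t *\<^sub>R x"] linear_scale[OF l, of t x] by simp
    also have "\<dots> = (\<Sum>k\<le>m. t ^ k *\<^sub>R c1 k) + t *\<^sub>R (\<Sum>k\<le>m. t ^ k *\<^sub>R c2 k)"
      unfolding ea ex c1 c2 ..
    also have "\<dots> = (\<Sum>k\<le>Suc m. t ^ k *\<^sub>R c k)"
    proof -
      have s1: "(\<Sum>k\<le>Suc m. t ^ k *\<^sub>R (if k \<le> m then c1 k else 0)) = (\<Sum>k\<le>m. t ^ k *\<^sub>R c1 k)"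
        by (simp add: sum.atMost_Suc)
      have s2: "(\<Sum>k\<le>Suc m. t ^ k *\<^sub>R (if k = 0 then 0 else c2 (k - 1))) = t *\<^sub>R (\<Sum>k\<le>m. t ^ k *\<^sub>R c2 k)"
        unfolding sum.atMost_Suc_shift by (simp add: scaleR_sum_right)
      show ?thesis unfolding c_def scaleR_add_right sum.distrib s1 s2 ..
    qed
    finally show "A (\<lambda>i. if i < Suc m then a + t *\<^sub>R x else z i) = (\<Sum>k\<le>Suc m. t ^ k *\<^sub>R c k)"
      unfolding e0 .
  qed
qed

lemma interp_list:
  "\<exists>L :: (real \<times> real) list. \<forall>k\<in>{1..n}. (\<Sum>(l, s)\<leftarrow>L. l * s ^ k) = (if k = 1 then 1 else 0)"
proof (induction n)
  case 0
  show ?case by (intro exI[of _ "[]"]) simp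
next
  case (Suc n)
  show ?case
  proof (cases "n = 0")
    case True
    then show ?thesis by (intro exI[of _ "[(1, 1)]"]) auto
  next
    case False
    obtain L :: "(real \<times> real) list" where L: "\<forall>k\<in>{1..n}. (\<Sum>(l, s)\<leftarrow>L. l * s ^ k) = (if k = 1 then 1 else 0)"
      using Suc.IH by blast
    define q :: real where "q = 2 ^ n"
    have q: "q > 1" using False by (simp add: q_def)
    define \<alpha> where "\<alpha> = q / (q - 1)"
    define \<beta> where "\<beta> = - 1 / (q - 1)"
    define L' where "L' = map (\<lambda>(l, s). (\<alpha> * l, s)) L @ map (\<lambda>(l, s). (\<beta> * l / 2, 2 * s)) L"
    have mom: "(\<Sum>(l, s)\<leftarrow>L'. l * s ^ k) = (\<alpha> + \<beta> * 2 ^ (k - 1)) * (\<Sum>(l, s)\<leftarrow>L. l * s ^ k)"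
      if "k \<ge> 1" for k
    proof -
      have a1: "(\<Sum>(l, s)\<leftarrow>map (\<lambda>(l, s). (\<alpha> * l, s)) L. l * s ^ k) = \<alpha> * (\<Sum>(l, s)\<leftarrow>L. l * s ^ k)" for L
        by (induction L) (auto simp: algebra_simps)
      have a2: "(\<Sum>(l, s)\<leftarrow>map (\<lambda>(l, s). (\<beta> * l / 2, 2 * s)) L. l * s ^ k) = \<beta> * 2 ^ (k - 1) * (\<Sum>(l, s)\<leftarrow>L. l * s ^ k)" for L
      proof (induction L)
        case Nil then show ?case by simp
      next
        case (Cons p L)
        obtain l s where p: "p = (l, s)" by force
        have "\<beta> * l / 2 * (2 * s) ^ k = \<beta> * 2 ^ (k - 1) * (l * s ^ k)"
        proof -
          have "(2::real) ^ k = 2 * 2 ^ (k - 1)" using that by (cases k) auto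
          then show ?thesis by (simp add: power_mult_distrib)
        qed
        then show ?case using Cons by (simp add: p algebra_simps)
      qed
      show ?thesis unfolding L'_def map_append sum_list_append a1 a2 by (simp add: algebra_simps)
    qed
    show ?thesis
    proof (intro exI[of _ L'] ballI)
      fix k assume k: "k \<in> {1..Suc n}"
      show "(\<Sum>(l, s)\<leftarrow>L'. l * s ^ k) = (if k = 1 then 1 else 0)"
      proof (cases "k = Suc n")
        case True
        have kq: "(2::real) ^ (k - 1) = q" using True by (simp add: q_def)
        have "\<alpha> + \<beta> * q = 0"
        proof -
          have "q - 1 \<noteq> 0" using q by simp
          then show ?thesis unfolding \<alpha>_def \<beta>_def by (simp add: field_simps)
        qed
        then have "\<alpha> + \<beta> * 2 ^ (k - 1) = 0" unfolding kq .
        then show ?thesis using mom[of k] k True False by simp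
      next
        case kn: False
        then have "k \<in> {1..n}" using k by auto
        then have Lk: "(\<Sum>(l, s)\<leftarrow>L. l * s ^ k) = (if k = 1 then 1 else 0)" using L by blast
        show ?thesis
        proof (cases "k = 1")
          case True
          have "\<alpha> + \<beta> = (q - 1) / (q - 1)"
            unfolding \<alpha>_def \<beta>_def by (simp only: add_divide_distrib[symmetric] divide_minus_left[symmetric]) simp
          also have "\<dots> = 1" using q by simp
          finally have "\<alpha> + \<beta> = 1" .
          then show ?thesis using mom[of k] Lk True by simp
        next
          case False
          then show ?thesis using mom[of k] Lk k by simp
        qed
      qed
    qed
  qed
qed

lemma interp_idx:
  "\<exists>N (lam :: nat \<Rightarrow> real) (s :: nat \<Rightarrow> real). \<forall>k\<in>{1..n}. (\<Sum>i<N. lam i * s i ^ k) = (if k = 1 then 1 else 0)"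
proof -
  obtain L :: "(real \<times> real) list" where L: "\<forall>k\<in>{1..n}. (\<Sum>(l, s)\<leftarrow>L. l * s ^ k) = (if k = 1 then 1 else 0)"
    using interp_list by blast
  have "(\<Sum>(l, s)\<leftarrow>L. l * s ^ k) = (\<Sum>i<length L. fst (L ! i) * snd (L ! i) ^ k)" for k
    by (simp add: sum_list_sum_nth atLeast0LessThan case_prod_beta)
  then show ?thesis using L by (intro exI[of _ "length L"] exI[of _ "\<lambda>i. fst (L ! i)"] exI[of _ "\<lambda>i. snd (L ! i)"]) auto
qed

lemma wp_elem_le:
  fixes x :: "nat \<Rightarrow> 'a::real_normed_vector" and \<phi> :: "'a \<Rightarrow> real" and p :: real
  assumes "bounded_linear \<phi>" "onorm \<phi> \<le> 1" "p > 0"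
  shows "(\<Sum>j=1..k. \<bar>\<phi> (x j)\<bar> powr p) powr (1/p) \<le> (\<Sum>j=1..k. norm (x j) powr p) powr (1/p)"
proof -
  have "\<bar>\<phi> (x j)\<bar> \<le> norm (x j)" for j
  proof -
    have "norm (\<phi> (x j)) \<le> onorm \<phi> * norm (x j)" by (rule onorm[OF assms(1)])
    also have "\<dots> \<le> 1 * norm (x j)" by (intro mult_right_mono assms(2)) simp
    finally show ?thesis by simp
  qed
  then have "(\<Sum>j=1..k. \<bar>\<phi> (x j)\<bar> powr p) \<le> (\<Sum>j=1..k. norm (x j) powr p)"
    using assms(3) by (intro sum_mono powr_mono2) auto
  then show ?thesis using assms(3) by (intro powr_mono2) (auto intro: sum_nonneg)
qed

lemma wp_bdd:
  fixes x :: "nat \<Rightarrow> 'a::real_normed_vector" and p :: real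
  assumes "p > 0"
  shows "bdd_above {(\<Sum>j=1..k. \<bar>\<phi> (x j)\<bar> powr p) powr (1/p) | \<phi>. bounded_linear \<phi> \<and> onorm \<phi> \<le> 1}"
  by (rule bdd_aboveI[where M = "(\<Sum>j=1..k. norm (x j) powr p) powr (1/p)"]) (use wp_elem_le[OF _ _ assms] in blast)

lemma wp_zero_mem:
  fixes x :: "nat \<Rightarrow> 'a::real_normed_vector" and p :: real
  shows "0 \<in> {(\<Sum>j=1..k. \<bar>\<phi> (x j)\<bar> powr p) powr (1/p) | \<phi>. bounded_linear \<phi> \<and> onorm \<phi> \<le> 1}"
proof -
  have "bounded_linear (\<lambda>_::'a. 0::real)" by simp
  moreover have "onorm (\<lambda>_::'a. 0::real) \<le> 1" by (simp add: onorm_zero)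
  moreover have "(\<Sum>j=1..k. \<bar>(\<lambda>_::'a. 0::real) (x j)\<bar> powr p) powr (1/p) = 0" by simp
  ultimately show ?thesis by (intro CollectI exI[of _ "\<lambda>_::'a. 0::real"]) auto
qed

lemma wp_nonneg:
  fixes x :: "nat \<Rightarrow> 'a::real_normed_vector" and p :: real
  assumes "p > 0"
  shows "0 \<le> weak_pnorm p k x"
  unfolding weak_pnorm_def by (rule cSup_upper[OF wp_zero_mem wp_bdd[OF assms]])

lemma wp_scale:
  fixes x :: "nat \<Rightarrow> 'a::real_normed_vector" and p :: real
  assumes p: "p > 0"
  shows "weak_pnorm p k (\<lambda>j. c *\<^sub>R x j) \<le> \<bar>c\<bar> * weak_pnorm p k x"
  unfolding weak_pnorm_def
proof (rule cSup_least)
  show "{(\<Sum>j=1..k. \<bar>\<phi> (c *\<^sub>R x j)\<bar> powr p) powr (1/p) | \<phi>. bounded_linear \<phi> \<and> onorm \<phi> \<le> 1} \<noteq> {}"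
    using wp_zero_mem by blast
  fix e assume "e \<in> {(\<Sum>j=1..k. \<bar>\<phi> (c *\<^sub>R x j)\<bar> powr p) powr (1/p) | \<phi>. bounded_linear \<phi> \<and> onorm \<phi> \<le> 1}"
  then obtain \<phi> :: "'a \<Rightarrow> real" where \<phi>: "bounded_linear \<phi>" "onorm \<phi> \<le> 1"
    and e: "e = (\<Sum>j=1..k. \<bar>\<phi> (c *\<^sub>R x j)\<bar> powr p) powr (1/p)" by blast
  have lin: "\<phi> (c *\<^sub>R v) = c * \<phi> v" for v
    using linear_scale[OF bounded_linear.linear[OF \<phi>(1)]] by simp
  have "(\<Sum>j=1..k. \<bar>\<phi> (c *\<^sub>R x j)\<bar> powr p) = \<bar>c\<bar> powr p * (\<Sum>j=1..k. \<bar>\<phi> (x j)\<bar> powr p)"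
    by (simp add: lin abs_mult powr_mult sum_distrib_left)
  then have "e = (\<bar>c\<bar> powr p) powr (1/p) * (\<Sum>j=1..k. \<bar>\<phi> (x j)\<bar> powr p) powr (1/p)"
    using e by (simp add: powr_mult)
  also have "(\<bar>c\<bar> powr p) powr (1/p) = \<bar>c\<bar>"
    using p by (simp add: powr_powr)
  also have "(\<Sum>j=1..k. \<bar>\<phi> (x j)\<bar> powr p) powr (1/p) \<le> Sup {(\<Sum>j=1..k. \<bar>\<phi> (x j)\<bar> powr p) powr (1/p) | \<phi>. bounded_linear \<phi> \<and> onorm \<phi> \<le> 1}"
    by (rule cSup_upper[OF _ wp_bdd[OF p]]) (use \<phi> in blast)
  finally show "e \<le> \<bar>c\<bar> * Sup {(\<Sum>j=1..k. \<bar>\<phi> (x j)\<bar> powr p) powr (1/p) | \<phi>. bounded_linear \<phi> \<and> onorm \<phi> \<le> 1}"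
    by (simp add: mult_left_mono)
qed

lemma sq2: "((a::real) + b)\<^sup>2 \<le> 2 * a\<^sup>2 + 2 * b\<^sup>2"
proof -
  have "(a + b)\<^sup>2 = 2 * a\<^sup>2 + 2 * b\<^sup>2 - (a - b)\<^sup>2" by (simp add: power2_eq_square algebra_simps)
  moreover have "0 \<le> (a - b)\<^sup>2" by simp
  ultimately show ?thesis by linarith
qed

lemma norm_sum_sq:
  fixes v :: "nat \<Rightarrow> 'b::real_normed_vector"
  shows "(norm (\<Sum>i<N. v i))\<^sup>2 \<le> 2 ^ N * (\<Sum>i<N. (norm (v i))\<^sup>2)"
proof (induction N)
  case 0 then show ?case by simp
next
  case (Suc N)
  have "(norm (\<Sum>i<Suc N. v i))\<^sup>2 \<le> (norm (\<Sum>i<N. v i) + norm (v N))\<^sup>2"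
    by (simp add: power_mono norm_triangle_ineq)
  also have "\<dots> \<le> 2 * (norm (\<Sum>i<N. v i))\<^sup>2 + 2 * (norm (v N))\<^sup>2"
    by (rule sq2)
  also have "\<dots> \<le> 2 * (2 ^ N * (\<Sum>i<N. (norm (v i))\<^sup>2)) + 2 ^ Suc N * (norm (v N))\<^sup>2"
  proof -
    have "(2::real) \<le> 2 ^ Suc N" by simp
    then have "2 * (norm (v N))\<^sup>2 \<le> 2 ^ Suc N * (norm (v N))\<^sup>2" by (intro mult_right_mono) auto
    then show ?thesis using Suc.IH by linarith
  qed
  also have "\<dots> = 2 ^ Suc N * (\<Sum>i<Suc N. (norm (v i))\<^sup>2)" by (simp add: algebra_simps)
  finally show ?case .
qed

lemma D_interp:
  fixes A :: "(nat \<Rightarrow> 'a::real_normed_vector) \<Rightarrow> 'b::real_normed_vector"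
  assumes bm: "bounded_multilinear n A" and PA: "\<And>x. P x = A (\<lambda>_. x)"
    and D: "(P has_derivative D) (at a)"
    and mom: "\<forall>k\<in>{1..n}. (\<Sum>i<N. lam i * s i ^ k) = (if k = 1 then 1 else 0)"
  shows "D x = (\<Sum>i<N. lam i *\<^sub>R (P (a + s i *\<^sub>R x) - P a))"
proof -
  obtain c where c: "\<And>t. A (\<lambda>i. if i < n then a + t *\<^sub>R x else 0) = (\<Sum>k\<le>n. t ^ k *\<^sub>R c k)"
    using bm_poly[OF bm, of n a x "\<lambda>_. 0"] by auto
  have pc: "P (a + t *\<^sub>R x) = (\<Sum>k\<le>n. t ^ k *\<^sub>R c k)" for t
    unfolding PA c[symmetric] by (rule bm_cong[OF bm]) simp
  have bl: "bounded_linear D" using D by (rule has_derivative_bounded_linear)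
  have d1: "((\<lambda>t. P (a + t *\<^sub>R x)) has_vector_derivative D x) (at 0)"
  proof -
    have i: "((\<lambda>t::real. a + t *\<^sub>R x) has_derivative (\<lambda>t. t *\<^sub>R x)) (at 0)"
      by (auto intro!: derivative_eq_intros)
    have D': "(P has_derivative D) (at ((\<lambda>t::real. a + t *\<^sub>R x) 0))" using D by simp
    have "(P \<circ> (\<lambda>t::real. a + t *\<^sub>R x) has_derivative D \<circ> (\<lambda>t. t *\<^sub>R x)) (at 0)"
      by (rule diff_chain_at[OF i D'])
    moreover have "D \<circ> (\<lambda>t. t *\<^sub>R x) = (\<lambda>t. t *\<^sub>R D x)"
      using linear_scale[OF bounded_linear.linear[OF bl]] by (auto simp: fun_eq_iff)
    ultimately show ?thesis unfolding has_vector_derivative_def by (simp add: comp_def)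
  qed
  have d2: "((\<lambda>t. \<Sum>k\<le>n. t ^ k *\<^sub>R c k) has_vector_derivative (\<Sum>k\<le>n. (real k * 0 ^ (k - 1)) *\<^sub>R c k)) (at 0)"
    by (auto intro!: derivative_eq_intros has_vector_derivative_sum)
  have Dx: "D x = (\<Sum>k\<le>n. (real k * 0 ^ (k - 1)) *\<^sub>R c k)"
    using vector_derivative_unique_at[OF d1] d2 unfolding pc by blast
  have split0: "(\<Sum>k\<le>n. f k) = f 0 + (\<Sum>k\<in>{1..n}. f k)" for f :: "nat \<Rightarrow> 'b"
    by (simp add: atMost_atLeast0 sum.atLeast_Suc_atMost)
  have "D x = (\<Sum>k\<in>{1..n}. (if k = 1 then 1 else 0) *\<^sub>R c k)"
    unfolding Dx split0 by (auto intro!: sum.cong)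
  also have "\<dots> = (\<Sum>k\<in>{1..n}. (\<Sum>i<N. lam i * s i ^ k) *\<^sub>R c k)"
    using mom by (auto intro!: sum.cong)
  also have "\<dots> = (\<Sum>i<N. lam i *\<^sub>R (\<Sum>k\<in>{1..n}. s i ^ k *\<^sub>R c k))"
    by (simp add: scaleR_sum_left scaleR_sum_right) (rule sum.swap)
  also have "\<dots> = (\<Sum>i<N. lam i *\<^sub>R (P (a + s i *\<^sub>R x) - P a))"
  proof (rule sum.cong[OF refl])
    fix i
    have z: "(\<Sum>k\<in>{1..n}. (0::real) ^ k *\<^sub>R c k) = 0" by (intro sum.neutral) auto
    have "P a = P (a + 0 *\<^sub>R x)" by simp
    then have "P (a + s i *\<^sub>R x) - P a = (\<Sum>k\<in>{1..n}. s i ^ k *\<^sub>R c k)"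
      unfolding pc split0 using z by simp
    then show "lam i *\<^sub>R (\<Sum>k\<in>{1..n}. s i ^ k *\<^sub>R c k) = lam i *\<^sub>R (P (a + s i *\<^sub>R x) - P a)" by simp
  qed
  finally show ?thesis .
qed

theorem mainTheorem11:
  fixes P :: "'a::banach \<Rightarrow> 'b::banach" and p :: real and n :: nat
  assumes "1 \<le> p"
    and "continuous_homogeneous_polynomial n P"
    and "\<forall>b. almost_p_summing_at p P b"
  shows "\<forall>a. \<exists>D. (P has_derivative D) (at a) \<and> almost_p_summing_at p D 0"
proof
  fix a :: 'a
  have p0: "p > 0" using assms(1) by simp
  obtain A where bm: "bounded_multilinear n A" and PA: "\<And>x. P x = A (\<lambda>_. x)"
    using assms(2) unfolding continuous_homogeneous_polynomial_def by blast
  define D where "D h = (\<Sum>k<n. A ((\<lambda>_. a)(k := h)))" for h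
  have PD: "(P has_derivative D) (at a)"
  proof -
    have "P = (\<lambda>x. A (\<lambda>_. x))" using PA by (simp add: fun_eq_iff)
    then show ?thesis unfolding D_def[abs_def] using bm_deriv[OF bm, of a] by simp
  qed
  have bl: "bounded_linear D" using PD by (rule has_derivative_bounded_linear)
  obtain N and lam s :: "nat \<Rightarrow> real" where mom: "\<forall>k\<in>{1..n}. (\<Sum>i<N. lam i * s i ^ k) = (if k = 1 then 1 else 0)"
    using interp_idx by blast
  have Dx: "D x = (\<Sum>i<N. lam i *\<^sub>R (P (a + s i *\<^sub>R x) - P a))" for x
    by (rule D_interp[OF bm PA PD mom])
  obtain C0 e0 r0 where C0: "C0 > 0" and e0: "e0 > 0" and r0: "r0 > 0"
    and H: "\<And>k (x :: nat \<Rightarrow> 'a). weak_pnorm p k x < e0 \<Longrightarrow>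
          sqrt (integral {0..1} (\<lambda>t. (norm (\<Sum>j=1..k. rademacher j t *\<^sub>R (P (a + x j) - P a)))\<^sup>2))
            \<le> C0 * weak_pnorm p k x powr r0"
    using assms(3) unfolding almost_p_summing_at_def by blast
  define S where "S = (\<Sum>i<N. \<bar>s i\<bar>)"
  have S0: "S \<ge> 0" unfolding S_def by (simp add: sum_nonneg)
  define e' where "e' = e0 / (1 + S)"
  define K where "K = 2 ^ N * (\<Sum>i<N. (lam i * C0 * \<bar>s i\<bar> powr r0)\<^sup>2)"
  have K0: "K \<ge> 0" unfolding K_def by (simp add: sum_nonneg)
  have "almost_p_summing_at p D 0"
    unfolding almost_p_summing_at_def
  proof (rule exI[of _ "sqrt K + 1"], rule exI[of _ e'], rule exI[of _ r0], intro conjI allI impI)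
    show "sqrt K + 1 > 0" using K0 by (simp add: add_nonneg_pos)
    show "e' > 0" unfolding e'_def using e0 S0 by simp
    show "r0 > 0" by fact
    fix k and x :: "nat \<Rightarrow> 'a"
    assume wx: "weak_pnorm p k x < e'"
    define w where "w = weak_pnorm p k x"
    have w0: "w \<ge> 0" unfolding w_def by (rule wp_nonneg[OF p0])
    define U where "U i t = (\<Sum>j=1..k. rademacher j t *\<^sub>R (P (a + s i *\<^sub>R x j) - P a))" for i t
    define I where "I i = integral {0..1} (\<lambda>t. (norm (U i t))\<^sup>2)" for i
    have Ib: "I i \<le> (C0 * \<bar>s i\<bar> powr r0 * w powr r0)\<^sup>2" if i: "i < N" for i
    proof -
      define wi where "wi = weak_pnorm p k (\<lambda>j. s i *\<^sub>R x j)"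
      have wi0: "wi \<ge> 0" unfolding wi_def by (rule wp_nonneg[OF p0])
      have wi_le: "wi \<le> \<bar>s i\<bar> * w" unfolding wi_def w_def by (rule wp_scale[OF p0])
      have "\<bar>s i\<bar> \<le> S" unfolding S_def using i by (intro member_le_sum) auto
      then have "\<bar>s i\<bar> * w \<le> S * w" using w0 by (intro mult_right_mono)
      also have "S * w \<le> S * e'" using wx S0 unfolding w_def by (intro mult_left_mono) auto
      also have "S * e' < e0"
      proof -
        have "e' > 0" unfolding e'_def using e0 S0 by simp
        then have "S * e' < (1 + S) * e'" by simp
        also have "(1 + S) * e' = e0" unfolding e'_def using S0 by simp
        finally show ?thesis .
      qed
      finally have "wi < e0" using wi_le by linarith
      then have "sqrt (I i) \<le> C0 * wi powr r0"
        using H[of k "\<lambda>j. s i *\<^sub>R x j"] unfolding I_def U_def wi_def by simp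
      also have "\<dots> \<le> C0 * (\<bar>s i\<bar> * w) powr r0"
        using C0 r0 wi0 wi_le by (intro mult_left_mono powr_mono2) auto
      also have "\<dots> = C0 * \<bar>s i\<bar> powr r0 * w powr r0"
        using w0 by (simp add: powr_mult)
      finally have sq: "sqrt (I i) \<le> C0 * \<bar>s i\<bar> powr r0 * w powr r0" .
      have I0: "I i \<ge> 0" unfolding I_def U_def by (intro integral_nonneg rad_integrable) auto
      then have "I i = (sqrt (I i))\<^sup>2" by simp
      also have "\<dots> \<le> (C0 * \<bar>s i\<bar> powr r0 * w powr r0)\<^sup>2"
        using sq I0 by (intro power_mono) auto
      finally show ?thesis .
    qed
    define F where "F t = (norm (\<Sum>j=1..k. rademacher j t *\<^sub>R (D (0 + x j) - D 0)))\<^sup>2" for t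
    define G where "G t = (\<Sum>i<N. (2 ^ N * (lam i)\<^sup>2) * (norm (U i t))\<^sup>2)" for t
    have FG: "F t \<le> G t" for t
    proof -
      have D0: "D 0 = 0" using linear_0[OF bounded_linear.linear[OF bl]] .
      have "(\<Sum>j=1..k. rademacher j t *\<^sub>R (D (0 + x j) - D 0))
          = (\<Sum>j=1..k. rademacher j t *\<^sub>R (\<Sum>i<N. lam i *\<^sub>R (P (a + s i *\<^sub>R x j) - P a)))"
        by (simp add: D0 Dx)
      also have "\<dots> = (\<Sum>i<N. lam i *\<^sub>R U i t)"
        unfolding U_def scaleR_sum_right by (subst sum.swap) (simp add: ac_simps)
      finally have e: "F t = (norm (\<Sum>i<N. lam i *\<^sub>R U i t))\<^sup>2" unfolding F_def by simp
      have "(norm (\<Sum>i<N. lam i *\<^sub>R U i t))\<^sup>2 \<le> 2 ^ N * (\<Sum>i<N. (norm (lam i *\<^sub>R U i t))\<^sup>2)"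
        by (rule norm_sum_sq)
      also have "\<dots> = G t" unfolding G_def
        by (simp add: sum_distrib_left power_mult_distrib ac_simps)
      finally show ?thesis using e by simp
    qed
    have intU: "(\<lambda>t. (norm (U i t))\<^sup>2) integrable_on {0..1}" for i
      unfolding U_def by (rule rad_integrable)
    have intF: "F integrable_on {0..1}" unfolding F_def by (rule rad_integrable)
    have intU': "(\<lambda>t. c * (norm (U i t))\<^sup>2) integrable_on {0..1}" for c i
      using integrable_cmul[OF intU[of i], of c] by simp
    have intG: "G integrable_on {0..1}" unfolding G_def
    proof (rule integrable_sum)
      fix i show "(\<lambda>t. 2 ^ N * (lam i)\<^sup>2 * (norm (U i t))\<^sup>2) integrable_on {0..1}" by (rule intU')
    qed simp
    have "integral {0..1} F \<le> integral {0..1} G"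
      by (rule integral_le[OF intF intG FG])
    also have "integral {0..1} G = (\<Sum>i<N. (2 ^ N * (lam i)\<^sup>2) * I i)"
      unfolding G_def I_def
      by (subst integral_sum) (auto simp: integral_mult[symmetric] intU intU')
    also have "\<dots> \<le> (\<Sum>i<N. (2 ^ N * (lam i)\<^sup>2) * (C0 * \<bar>s i\<bar> powr r0 * w powr r0)\<^sup>2)"
      by (intro sum_mono mult_left_mono Ib) auto
    also have "\<dots> = K * (w powr r0)\<^sup>2"
      unfolding K_def by (simp add: sum_distrib_left sum_distrib_right power_mult_distrib ac_simps)
    finally have IF: "integral {0..1} F \<le> K * (w powr r0)\<^sup>2" .
    have "sqrt (integral {0..1} F) \<le> sqrt (K * (w powr r0)\<^sup>2)"
      using IF by simp
    also have "\<dots> = sqrt K * w powr r0" by (simp add: real_sqrt_mult)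
    also have "\<dots> \<le> (sqrt K + 1) * w powr r0" by (simp add: distrib_right)
    finally show "sqrt (integral {0..1} (\<lambda>t. (norm (\<Sum>j=1..k. rademacher j t *\<^sub>R (D (0 + x j) - D 0)))\<^sup>2))
            \<le> (sqrt K + 1) * weak_pnorm p k x powr r0"
      unfolding F_def[abs_def] w_def .
  qed
  then show "\<exists>D. (P has_derivative D) (at a) \<and> almost_p_summing_at p D 0"
    using PD by blast
qed

end
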